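(* Let $L>0$, $\mu\le0$, $\kappa:=\mu/L$, $\bar h(\kappa):=\frac{3}{1+\kappa+\sqrt{1-\kappa+\kappa^2}}$, and $\bar\kappa:=\frac{-9-5\sqrt5+\sqrt{190+90\sqrt5}}{4}\approx-0.1001$. Define on $(0,\bar h(\kappa)]$ $$p(h,\kappa)=\begin{cases}2h-h^2\frac{-\kappa}{1-\kappa}, & h\in(0,1],\\[2pt] \frac{h(2-h)(2-\kappa h)}{2-(1+\kappa)h}, & h\in[1,\bar h(\kappa)].\end{cases}$$ Then the step size $h_*$ maximizing $h\mapsto p(h,\kappa)$ over $(0,\bar h(\kappa)]$ (equivalently, minimizing the worst-case bound $\frac{2L[f(x_0)-f_*]}{1+Np(h,\kappa)}$ for the gradient method with constant step $h/L$ on $f\in\mathcal{F}_{\mu,L}$) is $$h_*(\kappa)=\begin{cases}h_{\mathrm{opt}}, & \kappa\le\bar\kappa,\\ \bar h(\kappa), & \bar\kappa<\kappa\le0,\end{cases}$$ where $h_{\mathrm{opt}}$ is the unique solution in $[1,\bar h(\kappa)]$ of $$-\kappa(1+\kappa)h^3+\big[3\kappa+(1+\kappa)^2\big]h^2-4(1+\kappa)h+4=0.$$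
   Context: For $L>0$ and $\mu\le L$, $\mathcal{F}_{\mu,L}(\mathbb{R}^d)$ denotes the class of differentiable functions $f:\mathbb{R}^d\to\mathbb{R}$ such that both $\frac L2\|\cdot\|^2-f$ and $f-\frac{\mu}{2}\|\cdot\|^2$ are convex. *)

theory Defs
  imports "HOL-Analysis.Analysis"
begin

definition hbar :: "real \<Rightarrow> real" where
  "hbar \<kappa> = 3 / (1 + \<kappa> + sqrt (1 - \<kappa> + \<kappa>^2))"

definition kappabar :: real where
  "kappabar = (-9 - 5 * sqrt 5 + sqrt (190 + 90 * sqrt 5)) / 4"

text \<open>The piecewise function p(h,kappa); both branches agree at h = 1.\<close>
definition pfun :: "real \<Rightarrow> real \<Rightarrow> real" where
  "pfun h \<kappa> = (if h \<le> 1 then 2 * h - h^2 * ((- \<kappa>) / (1 - \<kappa>))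
                 else h * (2 - h) * (2 - \<kappa> * h) / (2 - (1 + \<kappa>) * h))"

definition hopt_poly :: "real \<Rightarrow> real \<Rightarrow> real" where
  "hopt_poly \<kappa> h = - \<kappa> * (1 + \<kappa>) * h^3 + (3 * \<kappa> + (1 + \<kappa>)^2) * h^2
                     - 4 * (1 + \<kappa>) * h + 4"

definition hopt :: "real \<Rightarrow> real" where
  "hopt \<kappa> = (THE h. h \<in> {1..hbar \<kappa>} \<and> hopt_poly \<kappa> h = 0)"

definition hstar :: "real \<Rightarrow> real" where
  "hstar \<kappa> = (if \<kappa> \<le> kappabar then hopt \<kappa> else hbar \<kappa>)"

end

theory Submission
  imports Defs
begin
lemma hbar_facts:
  fixes k :: real assumes k: "k \<le> 0"
  shows "hbar k > 1" "k*(hbar k)^2 - 2*(1+k)*hbar k + 3 = 0"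
proof -
  define s where "s = sqrt (1 - k + k^2)"
  have nn: "1 - k + k^2 \<ge> 0" using k by (smt (verit) zero_le_power2)
  have s0: "s \<ge> 0" unfolding s_def using nn by simp
  have s2: "s^2 = 1 - k + k^2" unfolding s_def using nn by simp
  have "s < 2 - k"
  proof -
    have "(2-k)^2 = 4 - 4*k + k^2" by (simp add: power2_eq_square algebra_simps)
    hence "s^2 < (2-k)^2" using s2 k by linarith
    from power_less_imp_less_base[OF this] k show ?thesis by simp
  qed
  have dpos: "1 + k + s > 0"
  proof (cases "1 + k \<ge> 0")
    case True
    have "k^2 \<ge> 0" by simp
    hence "s^2 \<noteq> 0" using s2 k by linarith
    hence "s \<noteq> 0" by auto
    then show ?thesis using True s0 by linarith
  next
    case False
    have "(-(1+k))^2 = 1 + 2*k + k^2" by (simp add: power2_eq_square algebra_simps)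
    hence "s^2 > (-(1+k))^2" using s2 k False by linarith
    from power_less_imp_less_base[OF this] s0 have "s > -(1+k)" by simp
    thus ?thesis by linarith
  qed
  have hb: "hbar k = 3 / (1 + k + s)" unfolding hbar_def s_def by simp
  show "hbar k > 1" unfolding hb using dpos \<open>s < 2 - k\<close> by (simp add: field_simps)
  define d where "d = 1 + k + s"
  have dp: "d > 0" using dpos d_def by simp
  have "k*(3/d)^2 - 2*(1+k)*(3/d) + 3 = (9*k - 6*(1+k)*d + 3*d^2)/d^2"
    using dp by (simp add: field_simps power2_eq_square)
  also have "9*k - 6*(1+k)*d + 3*d^2 = 3*(s^2 - (1 - k + k^2))"
    unfolding d_def by (simp add: power2_eq_square algebra_simps)
  also have "\<dots> = 0" using s2 by simp
  finally show "k*(hbar k)^2 - 2*(1+k)*hbar k + 3 = 0" unfolding hb d_def[symmetric] unfolding hb by simp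
qed

lemma Q_nonneg:
  fixes k h :: real assumes k: "k \<le> 0" and h: "1 \<le> h" "h \<le> hbar k"
  shows "k*h^2 - 2*(1+k)*h + 3 \<ge> 0"
proof -
  define H where "H = hbar k"
  have H1: "H > 1" and QH: "k*H^2 - 2*(1+k)*H + 3 = 0" using hbar_facts[OF k] by (auto simp: H_def)
  have "k*h^2 - 2*(1+k)*h + 3 = (k*h^2 - 2*(1+k)*h + 3) - (k*H^2 - 2*(1+k)*H + 3)" using QH by simp
  also have "\<dots> = (H - h) * (2 - k*(h + H - 2))" by (simp add: power2_eq_square algebra_simps)
  also have "\<dots> \<ge> 0"
  proof -
    have "k*(h + H - 2) \<le> 0" using k h H1 by (simp add: mult_nonpos_nonneg)
    thus ?thesis using h H_def by simp
  qed
  finally show ?thesis .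
qed

lemma dP_neg:
  fixes k h :: real assumes k: "k \<le> 0" and h: "1 \<le> h" and Q: "k*h^2 - 2*(1+k)*h + 3 \<ge> 0"
  shows "-3*k*(1+k)*h^2 + 2*(3*k+(1+k)^2)*h - 4*(1+k) < 0"
proof -
  define m where "m = -k"
  define t where "t = h - 1"
  have m: "m \<ge> 0" and t: "t \<ge> 0" using k h by (auto simp: m_def t_def)
  have kk: "k = -m" and hh: "h = 1 + t" by (auto simp: m_def t_def)
  have Q': "1 + m - 2*t - m*t^2 \<ge> 0" using Q unfolding kk hh by (simp add: power2_eq_square algebra_simps)
  have "m*t^2 \<ge> 0" using m by simp
  hence a: "1 + m - 2*t \<ge> 0" using Q' by linarith
  have b: "m*t*(1 + m - 2*t) \<ge> 0" using m t a by simp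
  have c: "(m+1)^2 + 3*m*t + 3*m^2*t + 3*m^2*t^2 > 0"
  proof -
    have "(m+1)^2 > 0" using m by simp
    moreover have "3*m*t + 3*m^2*t + 3*m^2*t^2 \<ge> 0" using m t by simp
    ultimately show ?thesis by linarith
  qed
  have "-(-3*k*(1+k)*h^2 + 2*(3*k+(1+k)^2)*h - 4*(1+k)) =
     (1 + m - 2*t - m*t^2) + m*t*(1 + m - 2*t) + ((m+1)^2 + 3*m*t + 3*m^2*t + 3*m^2*t^2)"
    unfolding kk hh by (simp add: power2_eq_square algebra_simps)
  thus ?thesis using Q' b c by linarith
qed

lemma P_alt: "hopt_poly k h = (3 - (1+k)*h)*(k*h^2 - 2*(1+k)*h + 3) - ((1+k)*h)^2 + 5*((1+k)*h) - 5"
  unfolding hopt_poly_def by (simp add: power2_eq_square power3_eq_cube algebra_simps)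

lemma P1: "hopt_poly k 1 = 1"
  unfolding hopt_poly_def by (simp add: power2_eq_square algebra_simps)

lemma P_deriv: "(hopt_poly k has_real_derivative (-3*k*(1+k)*h^2 + 2*(3*k+(1+k)^2)*h - 4*(1+k))) (at h)"
proof -
  have e: "hopt_poly k = (\<lambda>h. - k * (1 + k) * h^3 + (3 * k + (1 + k)^2) * h^2 - 4 * (1 + k) * h + 4)"
    unfolding hopt_poly_def by (rule ext) simp
  show ?thesis unfolding e
    by (rule derivative_eq_intros refl | simp add: power2_eq_square algebra_simps)+
qed

lemma P_cont: "continuous_on A (hopt_poly k)"
  unfolding hopt_poly_def by (intro continuous_intros)

lemma P_dec:
  fixes k x y :: real assumes k: "k \<le> 0" and xy: "1 \<le> x" "x < y" "y \<le> hbar k"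
  shows "hopt_poly k y < hopt_poly k x"
proof (rule DERIV_neg_imp_decreasing_open[OF xy(2)])
  fix z assume z: "x < z" "z < y"
  have Q: "k*z^2 - 2*(1+k)*z + 3 \<ge> 0" using Q_nonneg[OF k, of z] z xy by simp
  show "\<exists>d. (hopt_poly k has_real_derivative d) (at z) \<and> d < 0"
    using P_deriv dP_neg[OF k _ Q] z xy by fastforce
qed (rule P_cont)

lemma q_deriv:
  fixes k h :: real assumes D: "2 - (1+k)*h \<noteq> 0"
  shows "((\<lambda>h. h*(2-h)*(2-k*h)/(2-(1+k)*h)) has_real_derivative 2*hopt_poly k h/(2-(1+k)*h)^2) (at h)"
proof -
  have dN: "((\<lambda>h. h*(2-h)*(2-k*h)) has_real_derivative (3*k*h^2 - 4*(1+k)*h + 4)) (at h)"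
    by (rule derivative_eq_intros refl | simp)+ (simp add: power2_eq_square algebra_simps)
  have dD: "((\<lambda>h. 2-(1+k)*h) has_real_derivative (-(1+k))) (at h)"
    by (rule derivative_eq_intros refl | simp)+
  have "((\<lambda>h. h*(2-h)*(2-k*h)/(2-(1+k)*h)) has_real_derivative
     ((3*k*h^2 - 4*(1+k)*h + 4)*(2-(1+k)*h) - (h*(2-h)*(2-k*h))*(-(1+k)))/((2-(1+k)*h)*(2-(1+k)*h))) (at h)"
    by (rule DERIV_divide[OF dN dD D])
  moreover have "(3*k*h^2 - 4*(1+k)*h + 4)*(2-(1+k)*h) - (h*(2-h)*(2-k*h))*(-(1+k)) = 2*hopt_poly k h"
    unfolding hopt_poly_def by (simp add: power2_eq_square power3_eq_cube algebra_simps)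
  ultimately show ?thesis by (simp add: power2_eq_square)
qed

lemma sqrt5_facts: "sqrt 5 ^ 2 = (5::real)" "sqrt (5::real) > 2" "sqrt (5::real) < 3"
proof -
  show "sqrt 5 ^ 2 = (5::real)" by simp
  show "sqrt (5::real) > 2" by (rule real_less_rsqrt) simp
  show "sqrt (5::real) < 3" by (rule real_sqrt_less_iff[of 5 9, simplified]) 
qed

lemma PH_sign:
  fixes k :: real assumes k: "k \<le> 0"
  shows "hopt_poly k (hbar k) \<le> 0 \<longleftrightarrow> k \<le> kappabar"
proof -
  define t where "t = sqrt 5"
  have t2: "t^2 = 5" and t_gt: "t > 2" and t_lt: "t < 3" using sqrt5_facts by (auto simp: t_def)
  define w where "w = sqrt (190 + 90*t)"
  have w2: "w^2 = 190 + 90*t" unfolding w_def using t_gt by simp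
  have w0: "w \<ge> 0" unfolding w_def using t_gt by simp
  have kb: "kappabar = (-9 - 5*t + w)/4" unfolding kappabar_def t_def w_def by simp
  define k2 where "k2 = (-9 - 5*t - w)/4"
  have kb_gt: "kappabar > -1"
  proof -
    have "(5+5*t)^2 < w^2" unfolding w2 using t2 t_gt by (simp add: power2_eq_square algebra_simps)
    from power_less_imp_less_base[OF this w0] show ?thesis unfolding kb by simp
  qed
  have k2_lt: "k2 < -1" unfolding k2_def using w0 t_gt by simp
  define H where "H = hbar k"
  have QH: "k*H^2 - 2*(1+k)*H + 3 = 0" using hbar_facts[OF k] H_def by simp
  define u where "u = (1+k)*H"
  have PH: "hopt_poly k H = -((u - (5-t)/2)*(u - (5+t)/2))"
  proof -
    have e1: "(u - (5-t)/2)*(u - (5+t)/2) = u^2 - ((5-t)/2 + (5+t)/2)*u + ((5-t)/2)*((5+t)/2)"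
      by (simp add: power2_eq_square algebra_simps)
    have e2: "(5-t)/2 + (5+t)/2 = 5" by (simp add: field_simps)
    have e3: "((5-t)/2)*((5+t)/2) = (25 - t^2)/4" by (simp add: power2_eq_square algebra_simps)
    show ?thesis unfolding P_alt QH u_def[symmetric] e1 e2 e3 t2 by simp
  qed
  have "k*H^2 \<le> 0" using k by (simp add: mult_nonpos_nonneg)
  hence u_le: "u \<le> 3/2" using QH unfolding u_def by linarith
  have ub: "u - (5+t)/2 < 0" using u_le t_gt by simp
  have PH_iff: "hopt_poly k H \<le> 0 \<longleftrightarrow> u - (5-t)/2 \<le> 0"
    unfolding PH using ub by (simp add: mult_le_0_iff zero_le_mult_iff)  
  define s where "s = sqrt (1 - k + k^2)"
  have nn: "1 - k + k^2 \<ge> 0" using k by (smt (verit) zero_le_power2)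
  have s0: "s \<ge> 0" unfolding s_def using nn by simp
  have s2: "s^2 = 1 - k + k^2" unfolding s_def using nn by simp
  have hb: "H = 3 / (1 + k + s)" unfolding H_def hbar_def s_def by simp
  have H1: "H > 1" using hbar_facts(1)[OF k] H_def by simp
  have dpos: "1 + k + s > 0"
  proof (rule ccontr)
    assume "\<not> 1 + k + s > 0"
    hence "3/(1+k+s) \<le> 0" by (simp add: divide_nonneg_nonpos)
    thus False using H1 hb by linarith
  qed
  define Xv where "Xv = (1+t)*(1+k) - (5-t) * s"
  have uX: "u - (5-t)/2 = Xv/(2*(1+k+s))"
    unfolding u_def hb Xv_def using dpos by (simp add: field_simps)
  have u_iff: "u - (5-t)/2 \<le> 0 \<longleftrightarrow> Xv \<le> 0"
    unfolding uX using dpos by (simp add: divide_le_0_iff)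
  have Xv_iff: "Xv \<le> 0 \<longleftrightarrow> k \<le> kappabar"
  proof (cases "1 + k \<le> 0")
    case True
    have "(1+t)*(1+k) \<le> 0" using True t_gt by (simp add: mult_nonneg_nonpos)
    moreover have "(5-t) * s \<ge> 0" using s0 t_lt by simp
    ultimately show ?thesis unfolding Xv_def using True kb_gt by simp
  next
    case False
    define Yv where "Yv = (1+t)*(1+k) + (5-t) * s"
    have Ypos: "Yv > 0" unfolding Yv_def using False s0 t_gt t_lt by (simp add: add_pos_nonneg)
    have XY: "4*(Xv*Yv) = ((3*t-6)*(4*k+9+5*t+w))*(4*k+9+5*t-w)"
    proof -
      have tt: "t*t = 5" using t2 by (simp add: power2_eq_square)
      have "4*(Xv*Yv) = 4*((1 + 2*t + t*t)*(1+k)^2 - (25 - 10*t + t*t) * s^2)"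
        unfolding Xv_def Yv_def by algebra
      also have "\<dots> = 4*((6 + 2*t)*(1+k)^2 - (30 - 10*t)*(1 - k + k^2))"
        unfolding tt s2 by simp
      also have "\<dots> = (3*t-6)*(16*k^2 + 8*(9+5*t)*k + 16) + 8*k*(15*(5 - t*t))"
        by algebra
      also have "\<dots> = (3*t-6)*(16*k^2 + 8*(9+5*t)*k + 16)"
        unfolding tt by simp
      also have "\<dots> = (3*t-6)*(16*k^2 + 8*(9+5*t)*k + 81 + 90*t + 25*(t*t) - w^2)"
        unfolding tt w2 by simp
      also have "\<dots> = ((3*t-6)*(4*k+9+5*t+w))*(4*k+9+5*t-w)" by algebra
      finally show ?thesis .
    qed
    have gen: "\<And>Z a::real. Z > 0 \<Longrightarrow> (Z*a \<le> 0 \<longleftrightarrow> a \<le> 0)" by (simp add: mult_le_0_iff)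
    have Zpos: "(3*t-6)*(4*k+9+5*t+w) > 0" using t_gt w0 False by simp
    have "Xv \<le> 0 \<longleftrightarrow> 4*(Xv*Yv) \<le> 0" using Ypos by (simp add: mult_le_0_iff)
    also have "\<dots> \<longleftrightarrow> 4*k+9+5*t-w \<le> 0" unfolding XY by (rule gen[OF Zpos])
    also have "\<dots> \<longleftrightarrow> k \<le> kappabar" unfolding kb by (auto simp: field_simps)
    finally show ?thesis .
  qed
  show ?thesis using PH_iff u_iff Xv_iff H_def by simp
qed

theorem proposition4p6:
  fixes L \<mu> \<kappa> :: real
  assumes "L > 0" and "\<mu> \<le> 0" and "\<kappa> = \<mu> / L"
  shows "(\<kappa> \<le> kappabar \<longrightarrow> (\<exists>!h. h \<in> {1..hbar \<kappa>} \<and> hopt_poly \<kappa> h = 0))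
    \<and> hstar \<kappa> \<in> {0<..hbar \<kappa>}
    \<and> (\<forall>h \<in> {0<..hbar \<kappa>}. pfun h \<kappa> \<le> pfun (hstar \<kappa>) \<kappa>)
    \<and> (\<forall>h \<in> {0<..hbar \<kappa>}. pfun h \<kappa> = pfun (hstar \<kappa>) \<kappa> \<longrightarrow> h = hstar \<kappa>)"
proof -
  have k: "\<kappa> \<le> 0" using assms by (simp add: divide_nonpos_pos)
  define H where "H = hbar \<kappa>"
  have H1: "H > 1" using hbar_facts(1)[OF k] H_def by simp
  define P where "P = hopt_poly \<kappa>"
  define q where "q = (\<lambda>h. h*(2-h)*(2-\<kappa>*h)/(2-(1+\<kappa>)*h))"
  have Dpos: "2-(1+\<kappa>)*h > 0" if "1 \<le> h" "h \<le> H" for h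
  proof -
    have Q: "\<kappa>*h^2 - 2*(1+\<kappa>)*h + 3 \<ge> 0" using Q_nonneg[OF k, of h] that H_def by simp
    have "\<kappa>*h^2 \<le> 0" using k by (simp add: mult_nonpos_nonneg)
    thus ?thesis using Q by linarith
  qed
  have pf_q: "pfun h \<kappa> = q h" if "1 \<le> h" for h
  proof (cases "h = 1")
    case True
    have "1 - \<kappa> > 0" using k by simp
    then show ?thesis unfolding True pfun_def q_def by (simp add: field_simps)
  next
    case False
    then show ?thesis using that unfolding pfun_def q_def by simp
  qed
  have pf_low: "pfun h \<kappa> < pfun 1 \<kappa>" if "0 < h" "h < 1" for h
  proof -
    define c where "c = (-\<kappa>)/(1-\<kappa>)"
    have c0: "c \<ge> 0" and c1: "c < 1" using k unfolding c_def by (auto simp: field_simps)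
    have "pfun 1 \<kappa> - pfun h \<kappa> = (1-h)*(2 - c*(1+h))"
      using that unfolding pfun_def c_def[symmetric] by (simp add: power2_eq_square algebra_simps)
    moreover have "c*(1+h) < 2"
    proof -
      have "c*(1+h) \<le> 1*(1+h)" using c0 c1 that by (intro mult_right_mono) auto
      hence "c*(1+h) \<le> 1+h" by simp
      thus ?thesis using that by linarith
    qed
    ultimately have "pfun 1 \<kappa> - pfun h \<kappa> > 0" using that by simp
    thus ?thesis by simp
  qed
  have P_cont': "continuous_on {a..b} P" for a b unfolding P_def by (rule P_cont)
  have EU: "\<exists>!h. h \<in> {1..H} \<and> P h = 0" if kb: "\<kappa> \<le> kappabar"
  proof -
    have PH: "P H \<le> 0" using PH_sign[OF k] kb H_def P_def by simp
    obtain x where x: "1 \<le> x" "x \<le> H" "P x = 0"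
      using IVT2'[of P H 0 1, OF PH _ _ P_cont'] P1 P_def H1 by auto
    show ?thesis
    proof (rule ex1I[of _ x])
      show "x \<in> {1..H} \<and> P x = 0" using x by simp
    next
      fix y assume y: "y \<in> {1..H} \<and> P y = 0"
      show "y = x"
      proof (rule ccontr)
        assume "y \<noteq> x"
        hence "y < x \<or> x < y" by linarith
        thus False
          using P_dec[OF k, of y x] P_dec[OF k, of x y] x y H_def P_def by auto
      qed
    qed
  qed
  define r where "r = hstar \<kappa>"
  have R: "1 < r \<and> r \<le> H \<and> (\<forall>h. 1 \<le> h \<longrightarrow> h < r \<longrightarrow> P h > 0)
       \<and> (\<forall>h. r < h \<longrightarrow> h \<le> H \<longrightarrow> P h < 0)"
  proof (cases "\<kappa> \<le> kappabar")
    case True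
    have rdef: "r = (THE h. h \<in> {1..H} \<and> P h = 0)"
      unfolding r_def hstar_def hopt_def using True H_def P_def by simp
    have rr: "r \<in> {1..H} \<and> P r = 0" unfolding rdef by (rule theI'[OF EU[OF True]])
    have "r \<noteq> 1" using rr P1 P_def by auto
    hence r1: "1 < r" using rr by simp
    have a: "P h > 0" if "1 \<le> h" "h < r" for h
      using P_dec[OF k, of h r] that rr H_def P_def by auto
    have b: "P h < 0" if "r < h" "h \<le> H" for h
      using P_dec[OF k, of r h] that rr H_def P_def by auto
    show ?thesis using r1 rr a b by auto
  next
    case False
    have rH: "r = H" unfolding r_def hstar_def H_def using False by simp
    have PH: "P H > 0" using PH_sign[OF k] False H_def P_def by simp
    have a: "P h > 0" if "1 \<le> h" "h < r" for h
      using P_dec[OF k, of h H] that rH PH H_def P_def by auto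
    show ?thesis using rH H1 a by auto
  qed
  have r1: "1 < r" and rH: "r \<le> H" using R by auto
  have qd: "(q has_real_derivative 2*P z/(2-(1+\<kappa>)*z)^2) (at z)" if "1 \<le> z" "z \<le> H" for z
    unfolding q_def P_def using q_deriv[of \<kappa> z] Dpos[OF that] by simp
  have qcont: "continuous_on {x..y} q" if "1 \<le> x" "y \<le> H" for x y
    by (rule continuous_at_imp_continuous_on) (use qd[THEN DERIV_isCont] that in auto)
  have q_inc: "q x < q y" if "1 \<le> x" "x < y" "y \<le> r" for x y
  proof (rule DERIV_pos_imp_increasing_open[OF that(2) _ qcont])
    fix z assume z: "x < z" "z < y"
    have "P z > 0" using R z that by auto
    moreover have "(2-(1+\<kappa>)*z)^2 > 0" using Dpos[of z] z that rH by auto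
    ultimately show "\<exists>d. (q has_real_derivative d) (at z) \<and> d > 0"
      using qd[of z] z that rH by (intro exI[of _ "2*P z/(2-(1+\<kappa>)*z)^2"]) auto
  qed (use that rH in auto)
  have q_dec: "q y < q x" if "r \<le> x" "x < y" "y \<le> H" for x y
  proof (rule DERIV_neg_imp_decreasing_open[OF that(2) _ qcont])
    fix z assume z: "x < z" "z < y"
    have "P z < 0" using R z that by auto
    moreover have "(2-(1+\<kappa>)*z)^2 > 0" using Dpos[of z] z that r1 by auto
    ultimately show "\<exists>d. (q has_real_derivative d) (at z) \<and> d < 0"
      using qd[of z] z that r1 by (intro exI[of _ "2*P z/(2-(1+\<kappa>)*z)^2"]) (auto simp: divide_neg_pos)
  qed (use that r1 in auto)
  have strict: "pfun h \<kappa> < pfun r \<kappa>" if hs: "0 < h" "h \<le> H" "h \<noteq> r" for h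
  proof -
    have pr: "pfun r \<kappa> = q r" using pf_q r1 by simp
    consider "h < 1" | "1 \<le> h" "h < r" | "r < h" using hs by linarith
    then show ?thesis
    proof cases
      case 1
      have "pfun h \<kappa> < pfun 1 \<kappa>" using pf_low hs 1 by simp
      also have "\<dots> = q 1" using pf_q by simp
      also have "\<dots> < q r" using q_inc[of 1 r] r1 by simp
      finally show ?thesis using pr by simp
    next
      case 2
      then show ?thesis using q_inc[of h r] pf_q pr by simp
    next
      case 3
      then show ?thesis using q_dec[of r h] pf_q pr r1 hs by simp
    qed
  qed
  show ?thesis
  proof (intro conjI)
    show "\<kappa> \<le> kappabar \<longrightarrow> (\<exists>!h. h \<in> {1..hbar \<kappa>} \<and> hopt_poly \<kappa> h = 0)"
      using EU H_def P_def by simp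
    show "hstar \<kappa> \<in> {0<..hbar \<kappa>}" using r1 rH r_def H_def by simp
    show "\<forall>h \<in> {0<..hbar \<kappa>}. pfun h \<kappa> \<le> pfun (hstar \<kappa>) \<kappa>"
      using strict r_def H_def by (metis greaterThanAtMost_iff order_le_less)
    show "\<forall>h \<in> {0<..hbar \<kappa>}. pfun h \<kappa> = pfun (hstar \<kappa>) \<kappa> \<longrightarrow> h = hstar \<kappa>"
      using strict r_def H_def by (metis greaterThanAtMost_iff less_irrefl)
  qed
qed

end
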